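(* Let $\mathbb G$ be a step-two Carnot group, let $n\geq\operatorname{rank}\mathbb G$ and $k\in\{0,\dots,n\}$ be integers, and let $\pi:\mathbb F_n\to\mathbb G$ be a surjective Carnot morphism. For $\eta\in\Lambda^{n-k}(\mathbb R^n)$ the following are equivalent: (a) there is a map $\psi_\eta:\mathbb G\to\Lambda^n(\mathbb R^n)$ such that $\psi_\eta\circ\pi=\widetilde\psi_\eta$; (b) $\widetilde\psi_\eta(\theta,\omega)=\widetilde\psi_\eta(\theta',\omega')$ for all $(\theta,\omega)\in\mathbb F_n$ and all $(\theta',\omega')\in(\theta,\omega)\cdot\ker\pi$; (c) $\eta\in\Lambda^{n-k}(\pi)$. Furthermore, when these conditions hold, the map $\psi_\eta$ in (a) is unique.
   Context: A step-two Carnot group is $\mathbb G=V_1\times V_2$ ($V_1,V_2$ finite-dimensional real vector spaces, $V_2\ne\{0\}$) with a bilinear skew-symmetric $[\cdot,\cdot]:V_1\times V_1\to V_2$ whose image spans $V_2$, and group law $(x,z)\cdot(x',z')=(x+x',z+z'+[x,x'])$; $\operatorname{rank}\mathbb G=\dim V_1$. $\mathbb F_n=\Lambda^1(\mathbb R^n)\times\Lambda^2(\mathbb R^n)$ with bracket $[\theta,\theta']=\theta\wedge\theta'$. A Carnot morphism $\pi:\mathbb G\to\mathbb G'$ is $\pi(x,z)=(\pi_1(x),\pi_2(z))$ with $\pi_1,\pi_2$ linear and $\pi_2([x,y])=[\pi_1(x),\pi_1(y)]'$. For $\eta\in\Lambda^m(\mathbb R^n)$, $\operatorname{Anh}^{1,2}_\wedge\eta:=\{(\theta,\omega)\in\mathbb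 F_n:\theta\wedge\eta=0,\ \omega\wedge\eta=0\}$ and $\Lambda^m(\pi):=\{\eta\in\Lambda^m(\mathbb R^n):\ker\pi\subset\operatorname{Anh}^{1,2}_\wedge\eta\}$. For $\eta\in\Lambda^{n-k}(\mathbb R^n)$, $\widetilde\psi_\eta:\mathbb F_n\to\Lambda^n(\mathbb R^n)$ is $\widetilde\psi_\eta(\theta,\omega)=\omega^{k/2}\wedge\eta$ if $k$ is even and $\theta\wedge\omega^{(k-1)/2}\wedge\eta$ if $k$ is odd ($\omega^j$ the exterior power, $\omega^0=1$). *)

theory Defs
  imports "HOL-Analysis.Analysis"
begin

text \<open>An element of the exterior algebra of R^n is represented by its coefficient
  function on the standard basis: a map from finite index sets S (with S a subset of
  {0..<n}) to reals; the basis element e_S is e_{i1} wedge ... wedge e_{im} for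
  S = {i1 < ... < im}.\<close>

type_synonym form = "nat set \<Rightarrow> real"

definition forms :: "nat \<Rightarrow> nat \<Rightarrow> form set"
  where "forms n m = {\<alpha>. \<forall>S. \<alpha> S \<noteq> 0 \<longrightarrow> S \<subseteq> {..<n} \<and> card S = m}"

definition fzero :: form where "fzero = (\<lambda>S. 0)"
definition fone :: form where "fone = (\<lambda>S. if S = {} then 1 else 0)"
definition fadd :: "form \<Rightarrow> form \<Rightarrow> form" where "fadd \<alpha> \<beta> = (\<lambda>S. \<alpha> S + \<beta> S)"
definition fscale :: "real \<Rightarrow> form \<Rightarrow> form" where "fscale c \<alpha> = (\<lambda>S. c * \<alpha> S)"

text \<open>Sign of the shuffle: e_A wedge e_B = (-1)^(number of inversions) e_(A union B) for disjoint A, B.\<close>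
definition shuffle_sign :: "nat set \<Rightarrow> nat set \<Rightarrow> real"
  where "shuffle_sign A B = (-1) ^ card {(a, b). a \<in> A \<and> b \<in> B \<and> b < a}"

definition wedge :: "form \<Rightarrow> form \<Rightarrow> form"  (infixr \<open>\<and>\<^sub>w\<close> 70)
  where "wedge \<alpha> \<beta> = (\<lambda>S. if finite S then
            (\<Sum>A\<in>Pow S. shuffle_sign A (S - A) * \<alpha> A * \<beta> (S - A)) else 0)"

primrec wpow :: "form \<Rightarrow> nat \<Rightarrow> form"
  where "wpow \<omega> 0 = fone"
  | "wpow \<omega> (Suc j) = wedge \<omega> (wpow \<omega> j)"

definition Fn :: "nat \<Rightarrow> (form \<times> form) set"
  where "Fn n = forms n 1 \<times> forms n 2"

definition Fmult :: "form \<times> form \<Rightarrow> form \<times> form \<Rightarrow> form \<times> form"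
  where "Fmult p q = (fadd (fst p) (fst q), fadd (fadd (snd p) (snd q)) (wedge (fst p) (fst q)))"

definition step2_carnot :: "('v1::euclidean_space \<Rightarrow> 'v1 \<Rightarrow> 'v2::euclidean_space) \<Rightarrow> bool"
  where "step2_carnot br \<longleftrightarrow> bilinear br \<and> (\<forall>x y. br x y = - br y x)
            \<and> span (range (\<lambda>(x, y). br x y)) = UNIV"

definition carnot_rank :: "('v1::euclidean_space \<Rightarrow> 'v1 \<Rightarrow> 'v2::euclidean_space) \<Rightarrow> nat"
  where "carnot_rank br = DIM('v1)"

definition linear_on_forms :: "nat \<Rightarrow> nat \<Rightarrow> (form \<Rightarrow> 'v::real_vector) \<Rightarrow> bool"
  where "linear_on_forms n m f \<longleftrightarrow>
     (\<forall>\<alpha>\<in>forms n m. \<forall>\<beta>\<in>forms n m. f (fadd \<alpha> \<beta>) = f \<alpha> + f \<beta>) \<and>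
     (\<forall>c. \<forall>\<alpha>\<in>forms n m. f (fscale c \<alpha>) = c *\<^sub>R f \<alpha>)"

definition carnot_morphism_Fn ::
  "nat \<Rightarrow> ('v1::euclidean_space \<Rightarrow> 'v1 \<Rightarrow> 'v2::euclidean_space) \<Rightarrow> (form \<Rightarrow> 'v1) \<Rightarrow> (form \<Rightarrow> 'v2) \<Rightarrow> bool"
  where "carnot_morphism_Fn n br pi1 pi2 \<longleftrightarrow>
     linear_on_forms n 1 pi1 \<and> linear_on_forms n 2 pi2 \<and>
     (\<forall>\<theta>\<in>forms n 1. \<forall>\<theta>'\<in>forms n 1. pi2 (wedge \<theta> \<theta>') = br (pi1 \<theta>) (pi1 \<theta>'))"

definition cmap :: "(form \<Rightarrow> 'v1) \<Rightarrow> (form \<Rightarrow> 'v2) \<Rightarrow> form \<times> form \<Rightarrow> 'v1 \<times> 'v2"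
  where "cmap pi1 pi2 p = (pi1 (fst p), pi2 (snd p))"

definition surjective_Fn :: "nat \<Rightarrow> (form \<Rightarrow> 'v1) \<Rightarrow> (form \<Rightarrow> 'v2) \<Rightarrow> bool"
  where "surjective_Fn n pi1 pi2 \<longleftrightarrow> cmap pi1 pi2 ` Fn n = UNIV"

definition ker_Fn :: "nat \<Rightarrow> (form \<Rightarrow> 'v1::zero) \<Rightarrow> (form \<Rightarrow> 'v2::zero) \<Rightarrow> (form \<times> form) set"
  where "ker_Fn n pi1 pi2 = {p \<in> Fn n. cmap pi1 pi2 p = (0, 0)}"

definition Anh :: "nat \<Rightarrow> form \<Rightarrow> (form \<times> form) set"
  where "Anh n \<eta> = {(\<theta>, \<omega>) \<in> Fn n. wedge \<theta> \<eta> = fzero \<and> wedge \<omega> \<eta> = fzero}"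

definition forms_pi :: "nat \<Rightarrow> nat \<Rightarrow> (form \<Rightarrow> 'v1::zero) \<Rightarrow> (form \<Rightarrow> 'v2::zero) \<Rightarrow> form set"
  where "forms_pi n m pi1 pi2 = {\<eta> \<in> forms n m. ker_Fn n pi1 pi2 \<subseteq> Anh n \<eta>}"

definition psi_tilde :: "nat \<Rightarrow> form \<Rightarrow> form \<times> form \<Rightarrow> form"
  where "psi_tilde k \<eta> p = (if even k then wedge (wpow (snd p) (k div 2)) \<eta>
                             else wedge (fst p) (wedge (wpow (snd p) ((k - 1) div 2)) \<eta>))"

end

theory Submission
  imports Defs
begin


lemma fadd_apply[simp]: "fadd a b S = a S + b S" by (simp add: fadd_def)
lemma fscale_apply[simp]: "fscale c a S = c * a S" by (simp add: fscale_def)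
lemma fzero_apply[simp]: "fzero S = 0" by (simp add: fzero_def)

definition ninv :: "nat set \<Rightarrow> nat set \<Rightarrow> nat"
  where "ninv A B = card {(a, b). a \<in> A \<and> b \<in> B \<and> b < a}"

lemma sg_def2: "shuffle_sign A B = (-1) ^ ninv A B"
  by (simp add: shuffle_sign_def ninv_def)

lemma ninv_Un_left:
  assumes "finite A" "finite B" "finite C" "A \<inter> B = {}"
  shows "ninv (A \<union> B) C = ninv A C + ninv B C"
proof -
  have e: "{(a, b). a \<in> A \<union> B \<and> b \<in> C \<and> b < a} =
     {(a, b). a \<in> A \<and> b \<in> C \<and> b < a} \<union> {(a, b). a \<in> B \<and> b \<in> C \<and> b < a}" by auto
  have f1: "finite {(a, b). a \<in> A \<and> b \<in> C \<and> b < a}"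
    by (rule finite_subset[of _ "A \<times> C"]) (use assms in auto)
  have f2: "finite {(a, b). a \<in> B \<and> b \<in> C \<and> b < a}"
    by (rule finite_subset[of _ "B \<times> C"]) (use assms in auto)
  show ?thesis unfolding ninv_def e
    by (rule card_Un_disjoint[OF f1 f2]) (use assms in auto)
qed

lemma ninv_Un_right:
  assumes "finite A" "finite B" "finite C" "B \<inter> C = {}"
  shows "ninv A (B \<union> C) = ninv A B + ninv A C"
proof -
  have e: "{(a, b). a \<in> A \<and> b \<in> B \<union> C \<and> b < a} =
     {(a, b). a \<in> A \<and> b \<in> B \<and> b < a} \<union> {(a, b). a \<in> A \<and> b \<in> C \<and> b < a}" by auto
  have f1: "finite {(a, b). a \<in> A \<and> b \<in> B \<and> b < a}"
    by (rule finite_subset[of _ "A \<times> B"]) (use assms in auto)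
  have f2: "finite {(a, b). a \<in> A \<and> b \<in> C \<and> b < a}"
    by (rule finite_subset[of _ "A \<times> C"]) (use assms in auto)
  show ?thesis unfolding ninv_def e
    by (rule card_Un_disjoint[OF f1 f2]) (use assms in auto)
qed

lemma ninv_swap:
  assumes "finite A" "finite B" "A \<inter> B = {}"
  shows "ninv A B + ninv B A = card A * card B"
proof -
  let ?X = "{(a, b). a \<in> A \<and> b \<in> B \<and> b < a}"
  let ?Y = "{(a, b). a \<in> A \<and> b \<in> B \<and> a < b}"
  have img: "{(b, a). b \<in> B \<and> a \<in> A \<and> a < b} = prod.swap ` ?Y" by auto
  have cY: "card {(b, a). b \<in> B \<and> a \<in> A \<and> a < b} = card ?Y"
    unfolding img by (rule card_image) (simp add: inj_on_def)
  have fX: "finite ?X" by (rule finite_subset[of _ "A \<times> B"]) (use assms in auto)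
  have fY: "finite ?Y" by (rule finite_subset[of _ "A \<times> B"]) (use assms in auto)
  have u: "?X \<union> ?Y = A \<times> B" using assms(3) by (auto simp: linorder_neq_iff)
  have "card ?X + card ?Y = card (A \<times> B)"
    unfolding u[symmetric] by (rule card_Un_disjoint[symmetric, OF fX fY]) auto
  then show ?thesis unfolding ninv_def using cY by (simp add: card_cartesian_product)
qed

lemma sg_assoc:
  assumes "finite A" "finite B" "finite C" "A \<inter> B = {}" "A \<inter> C = {}" "B \<inter> C = {}"
  shows "shuffle_sign (A \<union> B) C * shuffle_sign A B = shuffle_sign A (B \<union> C) * shuffle_sign B C"
  unfolding sg_def2 using assms
  by (simp add: ninv_Un_left ninv_Un_right power_add[symmetric] ac_simps)

lemma sg_swap:
  assumes "finite A" "finite B" "A \<inter> B = {}"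
  shows "shuffle_sign A B = (-1) ^ (card A * card B) * shuffle_sign B A"
proof -
  have e: "card A * card B = ninv A B + ninv B A" using ninv_swap[OF assms] by simp
  have "(-1::real) ^ (card A * card B) * (-1) ^ ninv B A = (-1) ^ (ninv A B + 2 * ninv B A)"
    unfolding e by (simp add: power_add mult_2)
  also have "\<dots> = (-1) ^ ninv A B" by (simp add: power_add power_mult)
  finally show ?thesis unfolding sg_def2 by simp
qed

lemma sg_nonzero: "shuffle_sign A B \<noteq> 0"
  unfolding shuffle_sign_def by simp

lemma sg_empty_left[simp]: "shuffle_sign {} B = 1"
  unfolding shuffle_sign_def by simp

lemma wedge_fin: "wedge a b S = (if finite S then (\<Sum>A\<in>Pow S. shuffle_sign A (S - A) * a A * b (S - A)) else 0)"
  by (simp add: wedge_def)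

lemma wedge_add_left: "wedge (fadd a b) c = fadd (wedge a c) (wedge b c)"
  by (rule ext) (simp add: wedge_def sum.distrib[symmetric] algebra_simps)
lemma wedge_add_right: "wedge c (fadd a b) = fadd (wedge c a) (wedge c b)"
  by (rule ext) (simp add: wedge_def sum.distrib[symmetric] algebra_simps)
lemma wedge_scale_left: "wedge (fscale t a) c = fscale t (wedge a c)"
  by (rule ext) (simp add: wedge_def sum_distrib_left algebra_simps)
lemma wedge_scale_right: "wedge c (fscale t a) = fscale t (wedge c a)"
  by (rule ext) (simp add: wedge_def sum_distrib_left algebra_simps)
lemma wedge_zero_left[simp]: "wedge fzero c = fzero"
  by (rule ext) (simp add: wedge_def)
lemma wedge_zero_right[simp]: "wedge c fzero = fzero"
  by (rule ext) (simp add: wedge_def)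

lemma wedge_assoc: "wedge (wedge a b) c = wedge a (wedge b c)"
proof (rule ext)
  fix S :: "nat set"
  show "wedge (wedge a b) c S = wedge a (wedge b c) S"
  proof (cases "finite S")
    case False then show ?thesis by (simp add: wedge_def)
  next
    case fS: True
    let ?sg = shuffle_sign
    define f where "f D A = ?sg D (S - D) * ?sg A (D - A) * a A * b (D - A) * c (S - D)" for D A
    have L: "wedge (wedge a b) c S = (\<Sum>D\<in>Pow S. \<Sum>A\<in>{A\<in>Pow S. A \<subseteq> D}. f D A)"
    proof -
      have "wedge (wedge a b) c S = (\<Sum>D\<in>Pow S. ?sg D (S - D) * wedge a b D * c (S - D))"
        using fS by (simp add: wedge_fin)
      also have "\<dots> = (\<Sum>D\<in>Pow S. \<Sum>A\<in>{A\<in>Pow S. A \<subseteq> D}. f D A)"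
      proof (rule sum.cong[OF refl])
        fix D assume D: "D \<in> Pow S"
        then have fD: "finite D" using fS finite_subset by auto
        have pw: "{A\<in>Pow S. A \<subseteq> D} = Pow D" using D by auto
        show "?sg D (S - D) * wedge a b D * c (S - D) = (\<Sum>A\<in>{A\<in>Pow S. A \<subseteq> D}. f D A)"
          unfolding pw f_def using fD by (simp add: wedge_fin sum_distrib_left sum_distrib_right ac_simps)
      qed
      finally show ?thesis .
    qed
    have R: "wedge a (wedge b c) S = (\<Sum>A\<in>Pow S. \<Sum>B\<in>Pow (S - A).
        ?sg A (S - A) * ?sg B (S - A - B) * a A * b B * c (S - A - B))"
    proof -
      have "wedge a (wedge b c) S = (\<Sum>A\<in>Pow S. ?sg A (S - A) * a A * wedge b c (S - A))"
        using fS by (simp add: wedge_fin)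
      also have "\<dots> = (\<Sum>A\<in>Pow S. \<Sum>B\<in>Pow (S - A).
        ?sg A (S - A) * ?sg B (S - A - B) * a A * b B * c (S - A - B))"
        using fS by (simp add: wedge_fin sum_distrib_left ac_simps)
      finally show ?thesis .
    qed
    have sw: "(\<Sum>D\<in>Pow S. \<Sum>A\<in>{A\<in>Pow S. A \<subseteq> D}. f D A)
        = (\<Sum>A\<in>Pow S. \<Sum>D\<in>{D\<in>Pow S. A \<subseteq> D}. f D A)"
      using sum.swap_restrict[of "Pow S" "Pow S" f "\<lambda>D A. A \<subseteq> D"] fS by simp
    have inner: "(\<Sum>B\<in>Pow (S - A).
        ?sg A (S - A) * ?sg B (S - A - B) * a A * b B * c (S - A - B)) = (\<Sum>D\<in>{D\<in>Pow S. A \<subseteq> D}. f D A)" if A: "A \<in> Pow S" for A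
    proof (rule sum.reindex_bij_witness[where j = "\<lambda>B. A \<union> B" and i = "\<lambda>D. D - A"])
      fix B assume B: "B \<in> Pow (S - A)"
      have fA: "finite A" using A fS finite_subset by auto
      have fB: "finite B" using B fS finite_subset by auto
      have fC: "finite (S - A - B)" using fS by auto
      have e1: "A \<union> B - A = B" using B by auto
      have e2: "S - (A \<union> B) = S - A - B" by auto
      have e3: "B \<union> (S - A - B) = S - A" using B by auto
      have "?sg (A \<union> B) (S - A - B) * ?sg A B = ?sg A (B \<union> (S - A - B)) * ?sg B (S - A - B)"
        by (rule sg_assoc[OF fA fB fC]) (use B in auto)
      then have sg: "?sg (A \<union> B) (S - A - B) * ?sg A B = ?sg A (S - A) * ?sg B (S - A - B)"
        unfolding e3 .
      have "f (A \<union> B) A = (?sg (A \<union> B) (S - A - B) * ?sg A B) * a A * b B * c (S - A - B)"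
        unfolding f_def e1 e2 by (simp add: ac_simps)
      then show "f (A \<union> B) A = ?sg A (S - A) * ?sg B (S - A - B) * a A * b B * c (S - A - B)"
        unfolding sg by simp
    qed (use A in auto)
    show ?thesis unfolding L R sw using inner by (auto intro: sum.cong)
  qed
qed

lemma forms_D: "\<alpha> \<in> forms n m \<Longrightarrow> \<alpha> S \<noteq> 0 \<Longrightarrow> S \<subseteq> {..<n} \<and> card S = m"
  by (simp add: forms_def)

lemma forms_fin: "\<alpha> \<in> forms n m \<Longrightarrow> \<alpha> S \<noteq> 0 \<Longrightarrow> finite S"
  using forms_D[of \<alpha> n m S] finite_subset[of S "{..<n}"] by simp

lemma wedge_comm_sign:
  assumes a: "a \<in> forms n p" and b: "b \<in> forms n q"
  shows "wedge a b = fscale ((-1) ^ (p * q)) (wedge b a)"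
proof (rule ext)
  fix S :: "nat set"
  show "wedge a b S = fscale ((-1) ^ (p * q)) (wedge b a) S"
  proof (cases "finite S")
    case False then show ?thesis by (simp add: wedge_def)
  next
    case fS: True
    have ba0: "wedge b a S = (\<Sum>B\<in>Pow S. shuffle_sign B (S - B) * b B * a (S - B))"
      using fS by (simp add: wedge_fin)
    have re: "(\<Sum>A\<in>Pow S. shuffle_sign (S - A) A * b (S - A) * a A)
        = (\<Sum>B\<in>Pow S. shuffle_sign B (S - B) * b B * a (S - B))"
    proof (rule sum.reindex_bij_witness[where i = "\<lambda>A. S - A" and j = "\<lambda>A. S - A"])
      fix A assume "A \<in> Pow S"
      then have e: "S - (S - A) = A" by auto
      show "shuffle_sign (S - A) (S - (S - A)) * b (S - A) * a (S - (S - A)) =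
            shuffle_sign (S - A) A * b (S - A) * a A" unfolding e ..
    qed auto
    have ab: "wedge a b S = (\<Sum>A\<in>Pow S. (-1) ^ (p * q) * (shuffle_sign (S - A) A * b (S - A) * a A))"
      unfolding wedge_fin if_P[OF fS]
    proof (rule sum.cong[OF refl])
      fix A assume A: "A \<in> Pow S"
      show "shuffle_sign A (S - A) * a A * b (S - A) = (-1) ^ (p * q) * (shuffle_sign (S - A) A * b (S - A) * a A)"
      proof (cases "a A = 0 \<or> b (S - A) = 0")
        case True then show ?thesis by auto
      next
        case False
        then have c: "card A = p" "card (S - A) = q" using forms_D a b by auto
        have fA: "finite A" using A fS finite_subset by auto
        have "shuffle_sign A (S - A) = (-1) ^ (card A * card (S - A)) * shuffle_sign (S - A) A"
          by (rule sg_swap) (use fA fS in auto)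
        then show ?thesis unfolding c by simp
      qed
    qed
    show ?thesis unfolding ab ba0 re[symmetric] fscale_apply by (simp add: sum_distrib_left)
  qed
qed

lemma wedge_comm:
  assumes "a \<in> forms n p" "b \<in> forms n q" "even (p * q)"
  shows "wedge a b = wedge b a"
  using wedge_comm_sign[OF assms(1,2)] assms(3) by (simp add: fscale_def)

lemma forms_add: assumes "a \<in> forms n m" "b \<in> forms n m" shows "fadd a b \<in> forms n m"
  unfolding forms_def
proof (intro CollectI allI impI)
  fix S assume "fadd a b S \<noteq> 0"
  then have "a S \<noteq> 0 \<or> b S \<noteq> 0" by auto
  then show "S \<subseteq> {..<n} \<and> card S = m" using forms_D assms by blast
qed
lemma forms_scale: "a \<in> forms n m \<Longrightarrow> fscale t a \<in> forms n m"
  unfolding forms_def by auto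
lemma forms_zero: "fzero \<in> forms n m"
  unfolding forms_def by auto
lemma forms_fone: "fone \<in> forms n 0"
  unfolding forms_def fone_def by auto

lemma forms_big: assumes "a \<in> forms n m" "n < m" shows "a = fzero"
proof (rule ext)
  fix S show "a S = fzero S"
  proof (rule ccontr)
    assume "a S \<noteq> fzero S"
    then have "S \<subseteq> {..<n}" "card S = m" using forms_D assms(1) by auto
    then have "card S \<le> n" using card_mono[of "{..<n}" S] by auto
    then show False using assms(2) \<open>card S = m\<close> by simp
  qed
qed

lemma wedge_forms:
  assumes a: "a \<in> forms n p" and b: "b \<in> forms n q"
  shows "wedge a b \<in> forms n (p + q)"
  unfolding forms_def
proof (intro CollectI allI impI)
  fix S assume ne: "wedge a b S \<noteq> 0"
  then have fS: "finite S" by (simp add: wedge_def split: if_splits)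
  have "(\<Sum>A\<in>Pow S. shuffle_sign A (S - A) * a A * b (S - A)) \<noteq> 0"
    using ne fS by (simp add: wedge_fin)
  then obtain A where A: "A \<in> Pow S" "shuffle_sign A (S - A) * a A * b (S - A) \<noteq> 0"
    by (meson sum.not_neutral_contains_not_neutral)
  then have "a A \<noteq> 0" "b (S - A) \<noteq> 0" by auto
  then have "A \<subseteq> {..<n}" "card A = p" "S - A \<subseteq> {..<n}" "card (S - A) = q"
    using forms_D a b by auto
  moreover have "card S = card A + card (S - A)"
    using A(1) fS by (metis PowD card_Diff_subset finite_subset card_mono le_add_diff_inverse)
  ultimately show "S \<subseteq> {..<n} \<and> card S = p + q" using A(1) by auto
qed

lemma wedge_fone_left: assumes "\<eta> \<in> forms n m" shows "wedge fone \<eta> = \<eta>"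
proof (rule ext)
  fix S show "wedge fone \<eta> S = \<eta> S"
  proof (cases "finite S")
    case False then show ?thesis using forms_fin[OF assms] by (auto simp: wedge_def)
  next
    case True
    have "wedge fone \<eta> S = (\<Sum>A\<in>Pow S. shuffle_sign A (S - A) * fone A * \<eta> (S - A))"
      using True by (simp add: wedge_fin)
    also have "\<dots> = (\<Sum>A\<in>Pow S. if A = {} then \<eta> S else 0)"
      by (rule sum.cong) (auto simp: fone_def)
    also have "\<dots> = \<eta> S" using True by (simp add: sum.delta sum.delta')
    finally show ?thesis .
  qed
qed

lemma wpow_forms: "\<omega> \<in> forms n 2 \<Longrightarrow> wpow \<omega> j \<in> forms n (2 * j)"
  by (induction j) (auto simp: forms_fone dest: wedge_forms)



lemma wedge_sum_right:
  assumes "finite I"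
  shows "wedge x (\<lambda>S. \<Sum>i\<in>I. g i * f i S) = (\<lambda>S. \<Sum>i\<in>I. g i * wedge x (f i) S)"
  using assms
proof (induction I rule: finite_induct)
  case empty
  then show ?case using wedge_zero_right[of x] by (simp add: fzero_def)
next
  case (insert y I)
  have e: "(\<lambda>S. \<Sum>i\<in>insert y I. g i * f i S) = fadd (fscale (g y) (f y)) (\<lambda>S. \<Sum>i\<in>I. g i * f i S)"
    using insert by (simp add: fun_eq_iff)
  show ?case unfolding e wedge_add_right wedge_scale_right insert.IH using insert.hyps by (simp add: fun_eq_iff)
qed

lemma wedge_sum_left:
  assumes "finite I"
  shows "wedge (\<lambda>S. \<Sum>i\<in>I. g i * f i S) x = (\<lambda>S. \<Sum>i\<in>I. g i * wedge (f i) x S)"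
  using assms
proof (induction I rule: finite_induct)
  case empty
  then show ?case using wedge_zero_left[of x] by (simp add: fzero_def)
next
  case (insert y I)
  have e: "(\<lambda>S. \<Sum>i\<in>insert y I. g i * f i S) = fadd (fscale (g y) (f y)) (\<lambda>S. \<Sum>i\<in>I. g i * f i S)"
    using insert by (simp add: fun_eq_iff)
  show ?case unfolding e wedge_add_left wedge_scale_left insert.IH using insert.hyps by (simp add: fun_eq_iff)
qed

lemma wpow_expand:
  assumes a: "a \<in> forms n 2" and b: "b \<in> forms n 2"
  shows "\<exists>c. (\<forall>t. wpow (fadd a (fscale t b)) j = (\<lambda>S. \<Sum>i\<le>j. t ^ i * c i S))
     \<and> c 0 = wpow a j \<and> c 1 = fscale (real j) (wedge b (wpow a (j - 1))) \<and> (\<forall>i>j. c i = fzero)"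
proof (induction j)
  case 0
  show ?case
    by (rule exI[of _ "\<lambda>i. if i = 0 then fone else fzero"]) (auto simp: fun_eq_iff)
next
  case (Suc j)
  then obtain c where c1: "\<And>t. wpow (fadd a (fscale t b)) j = (\<lambda>S. \<Sum>i\<le>j. t ^ i * c i S)"
    and c2: "c 0 = wpow a j" and c3: "c 1 = fscale (real j) (wedge b (wpow a (j - 1)))"
    and c4: "\<And>i. i > j \<Longrightarrow> c i = fzero" by blast
  define c' where "c' i = fadd (wedge a (c i)) (if i = 0 then fzero else wedge b (c (i - 1)))" for i
  have "wpow (fadd a (fscale t b)) (Suc j) = (\<lambda>S. \<Sum>i\<le>Suc j. t ^ i * c' i S)" for t
  proof (rule ext)
    fix S
    have "wpow (fadd a (fscale t b)) (Suc j) S =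
       (\<Sum>i\<le>j. t ^ i * wedge a (c i) S) + t * (\<Sum>i\<le>j. t ^ i * wedge b (c i) S)"
      by (simp add: c1 wedge_add_left wedge_scale_left wedge_sum_right)
    also have "\<dots> = (\<Sum>i\<le>Suc j. t ^ i * wedge a (c i) S) +
        (\<Sum>i\<le>Suc j. t ^ i * (if i = 0 then fzero else wedge b (c (i - 1))) S)"
    proof -
      have h1: "(\<Sum>i\<le>Suc j. t ^ i * wedge a (c i) S) = (\<Sum>i\<le>j. t ^ i * wedge a (c i) S)"
        by (simp add: c4)
      have h2: "(\<Sum>i\<le>Suc j. t ^ i * (if i = 0 then fzero else wedge b (c (i - 1))) S)
          = t * (\<Sum>i\<le>j. t ^ i * wedge b (c i) S)"
        by (simp only: sum.atMost_Suc_shift) (simp add: sum_distrib_left ac_simps)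
      show ?thesis by (simp only: h1 h2)
    qed
    also have "\<dots> = (\<Sum>i\<le>Suc j. t ^ i * c' i S)"
      by (simp add: c'_def sum.distrib[symmetric] algebra_simps)
    finally show "wpow (fadd a (fscale t b)) (Suc j) S = (\<Sum>i\<le>Suc j. t ^ i * c' i S)" .
  qed
  moreover have "c' 0 = wpow a (Suc j)" by (simp add: c'_def c2 fun_eq_iff)
  moreover have "c' 1 = fscale (real (Suc j)) (wedge b (wpow a (Suc j - 1)))"
  proof (cases j)
    case 0
    then have "c 1 = fzero" using c4[of 1] by simp
    then have "wedge a (c 1) = fzero" by simp
    then show ?thesis using 0 by (simp add: c'_def c2 fun_eq_iff del: fzero_apply) (simp add: fzero_def)
  next
    case (Suc j')
    have "wedge a (wedge b (wpow a j')) = wedge b (wedge a (wpow a j'))"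
      by (metis wedge_assoc wedge_comm[OF a b] even_mult_iff even_numeral)
    moreover have "wedge a (c 1) = fscale (real j) (wedge a (wedge b (wpow a (j - 1))))"
      unfolding c3 by (rule wedge_scale_right)
    ultimately have "c' 1 = fadd (fscale (real j) (wedge b (wedge a (wpow a j')))) (wedge b (wpow a j))"
      using Suc by (simp add: c'_def c2)
    then show ?thesis using Suc by (simp add: fun_eq_iff algebra_simps)
  qed
  moreover have "\<forall>i>Suc j. c' i = fzero" by (simp add: c'_def c4 fun_eq_iff)
  ultimately show ?case by blast
qed

lemma F_sum:
  assumes Fadd: "\<And>x y. F (fadd x y) = fadd (F x) (F y)"
    and Fscale: "\<And>t x. F (fscale t x) = fscale t (F x)"
    and "finite I"
  shows "F (\<lambda>S. \<Sum>i\<in>I. g i * f i S) = (\<lambda>S. \<Sum>i\<in>I. g i * F (f i) S)"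
  using assms(3)
proof (induction I rule: finite_induct)
  case empty
  have "F fzero = fzero" using Fscale[of 0 fzero] by (simp add: fscale_def fzero_def)
  then show ?case by (simp add: fzero_def)
next
  case (insert y I)
  have e: "(\<lambda>S. \<Sum>i\<in>insert y I. g i * f i S) = fadd (fscale (g y) (f y)) (\<lambda>S. \<Sum>i\<in>I. g i * f i S)"
    using insert by (simp add: fun_eq_iff)
  show ?case unfolding e Fadd Fscale insert.IH using insert.hyps by (simp add: fun_eq_iff)
qed

lemma poly_extract:
  assumes a: "a \<in> forms n 2" and b: "b \<in> forms n 2" and j: "1 \<le> j"
    and Fadd: "\<And>x y. F (fadd x y) = fadd (F x) (F y)"
    and Fscale: "\<And>t x. F (fscale t x) = fscale t (F x)"
    and H: "\<And>t. F (wpow (fadd a (fscale t b)) j) = F (wpow a j)"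
  shows "F (wedge b (wpow a (j - 1))) = fzero"
proof -
  obtain c where c1: "\<And>t. wpow (fadd a (fscale t b)) j = (\<lambda>S. \<Sum>i\<le>j. t ^ i * c i S)"
    and c2: "c 0 = wpow a j" and c3: "c 1 = fscale (real j) (wedge b (wpow a (j - 1)))"
    using wpow_expand[OF a b, of j] by blast
  have "F (c 1) S = 0" for S
  proof -
    have "\<forall>t. (\<Sum>i\<le>j. F (c i) S * t ^ i) = F (c 0) S"
    proof
      fix t :: real
      have "F (wpow (fadd a (fscale t b)) j) S = F (c 0) S" using H c2 by simp
      then show "(\<Sum>i\<le>j. F (c i) S * t ^ i) = F (c 0) S"
        unfolding c1 F_sum[OF Fadd Fscale finite_atMost] by (simp add: ac_simps)
    qed
    then show ?thesis unfolding polyfun_eq_const using j by auto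
  qed
  then have "fscale (real j) (F (wedge b (wpow a (j - 1)))) = fzero"
    unfolding c3 Fscale by (simp add: fun_eq_iff)
  then show ?thesis using j by (simp add: fun_eq_iff)
qed



definition ebas :: "nat \<Rightarrow> form" where "ebas a = (\<lambda>S. if S = {a} then 1 else 0)"

lemma ebas_forms: "a < n \<Longrightarrow> ebas a \<in> forms n 1"
  unfolding forms_def ebas_def by auto

lemma base1:
  assumes b: "\<beta> \<in> forms n d" and d: "d < n"
    and H: "\<And>\<theta>. \<theta> \<in> forms n 1 \<Longrightarrow> wedge \<theta> \<beta> = fzero"
  shows "\<beta> = fzero"
proof (rule ext, rule ccontr)
  fix S assume ne: "\<beta> S \<noteq> fzero S"
  then have S: "S \<subseteq> {..<n}" "card S = d" using forms_D[OF b, of S] by auto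
  have fS: "finite S" using S finite_subset by auto
  have "\<not> {..<n} \<subseteq> S"
  proof
    assume "{..<n} \<subseteq> S"
    then have "card {..<n} \<le> card S" using fS card_mono by blast
    then show False using S d by simp
  qed
  then obtain a where a: "a < n" "a \<notin> S" by auto
  have e: "insert a S - {a} = S" using a by auto
  have "wedge (ebas a) \<beta> (insert a S) =
      (\<Sum>A\<in>Pow (insert a S). shuffle_sign A (insert a S - A) * ebas a A * \<beta> (insert a S - A))"
    using fS by (simp add: wedge_fin)
  also have "\<dots> = (\<Sum>A\<in>Pow (insert a S). if A = {a} then shuffle_sign {a} S * \<beta> S else 0)"
    by (rule sum.cong) (auto simp: ebas_def e)
  also have "\<dots> = shuffle_sign {a} S * \<beta> S" using fS by (simp add: sum.delta sum.delta')
  finally have "wedge (ebas a) \<beta> (insert a S) \<noteq> 0" using ne sg_nonzero by simp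
  then show False using H[OF ebas_forms[OF a(1)]] by simp
qed

lemma base2:
  assumes b: "\<beta> \<in> forms n d" and d: "d + 2 \<le> n"
    and H: "\<And>\<sigma>. \<sigma> \<in> forms n 2 \<Longrightarrow> wedge \<sigma> \<beta> = fzero"
  shows "\<beta> = fzero"
proof (rule base1[OF b])
  fix \<theta> assume th: "\<theta> \<in> forms n 1"
  show "wedge \<theta> \<beta> = fzero"
  proof (rule base1[OF wedge_forms[OF th b]])
    fix \<theta>' assume th': "\<theta>' \<in> forms n 1"
    have "wedge \<theta>' \<theta> \<in> forms n 2" using wedge_forms[OF th' th] by (metis one_add_one)
    then show "wedge \<theta>' (wedge \<theta> \<beta>) = fzero" using H wedge_assoc by metis
  qed (use d in simp)
qed (use d in simp)

lemma L_even:
  "2 * i \<le> n \<Longrightarrow> \<beta> \<in> forms n (n - 2 * i) \<Longrightarrow>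
   (\<And>\<omega>. \<omega> \<in> forms n 2 \<Longrightarrow> wedge (wpow \<omega> i) \<beta> = fzero) \<Longrightarrow> \<beta> = fzero"
proof (induction i arbitrary: \<beta>)
  case 0
  then show ?case using wedge_fone_left[OF "0.prems"(2)] "0.prems"(3)[OF forms_zero] by simp
next
  case (Suc i)
  have b: "\<beta> \<in> forms n (n - 2 * Suc i)" by fact
  show ?case
  proof (rule base2[OF b])
    fix \<sigma> assume s: "\<sigma> \<in> forms n 2"
    have e: "2 + (n - 2 * Suc i) = n - 2 * i" using Suc.prems(1) by simp
    have sb: "wedge \<sigma> \<beta> \<in> forms n (n - 2 * i)"
      using wedge_forms[OF s b] unfolding e .
    show "wedge \<sigma> \<beta> = fzero"
    proof (rule Suc.IH[OF _ sb])
      fix \<omega> assume w: "\<omega> \<in> forms n 2"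
      have "wedge (wedge \<sigma> (wpow \<omega> (Suc i - 1))) \<beta> = fzero"
      proof (rule poly_extract[OF w s, where F = "\<lambda>x. wedge x \<beta>"])
        fix t
        have "fadd \<omega> (fscale t \<sigma>) \<in> forms n 2" using w s by (simp add: forms_add forms_scale)
        then show "wedge (wpow (fadd \<omega> (fscale t \<sigma>)) (Suc i)) \<beta> = wedge (wpow \<omega> (Suc i)) \<beta>"
          using Suc.prems(3) w by simp
      qed (auto simp: wedge_add_left wedge_scale_left)
      moreover have "wedge \<sigma> (wpow \<omega> i) = wedge (wpow \<omega> i) \<sigma>"
        by (rule wedge_comm[OF s wpow_forms[OF w]]) simp
      ultimately show "wedge (wpow \<omega> i) (wedge \<sigma> \<beta>) = fzero" by (simp add: wedge_assoc)
    qed (use Suc.prems(1) in simp)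
  qed (use Suc.prems(1) in simp)
qed

lemma L_odd:
  assumes i: "2 * i + 1 \<le> n" and b: "\<beta> \<in> forms n (n - 2 * i - 1)"
    and H: "\<And>\<theta> \<omega>. \<theta> \<in> forms n 1 \<Longrightarrow> \<omega> \<in> forms n 2 \<Longrightarrow> wedge \<theta> (wedge (wpow \<omega> i) \<beta>) = fzero"
  shows "\<beta> = fzero"
proof (rule base1[OF b])
  fix \<theta> assume th: "\<theta> \<in> forms n 1"
  have e: "1 + (n - 2 * i - 1) = n - 2 * i" using i by simp
  have tb: "wedge \<theta> \<beta> \<in> forms n (n - 2 * i)" using wedge_forms[OF th b] unfolding e .
  show "wedge \<theta> \<beta> = fzero"
  proof (rule L_even[OF _ tb])
    fix \<omega> assume w: "\<omega> \<in> forms n 2"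
    have "wedge \<theta> (wpow \<omega> i) = wedge (wpow \<omega> i) \<theta>"
      by (rule wedge_comm[OF th wpow_forms[OF w]]) simp
    then show "wedge (wpow \<omega> i) (wedge \<theta> \<beta>) = fzero"
      using H[OF th w] by (metis wedge_assoc)
  qed (use i in simp)
qed (use i in simp)

lemma lemA:
  assumes a: "a \<in> forms n 2" and al: "\<alpha> \<in> forms n 2" and h: "wedge \<alpha> \<eta> = fzero"
  shows "wedge (wpow (fadd a \<alpha>) j) \<eta> = wedge (wpow a j) \<eta>"
proof (induction j)
  case 0 then show ?case by simp
next
  case (Suc j)
  have c: "wedge \<alpha> (wpow a j) = wedge (wpow a j) \<alpha>"
    by (rule wedge_comm[OF al wpow_forms[OF a]]) simp
  have "wedge (wpow (fadd a \<alpha>) (Suc j)) \<eta> = wedge (fadd a \<alpha>) (wedge (wpow a j) \<eta>)"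
    unfolding wpow.simps wedge_assoc Suc.IH ..
  also have "\<dots> = fadd (wedge a (wedge (wpow a j) \<eta>)) (wedge \<alpha> (wedge (wpow a j) \<eta>))"
    by (rule wedge_add_left)
  also have "wedge \<alpha> (wedge (wpow a j) \<eta>) = fzero"
    by (metis c h wedge_assoc wedge_zero_right)
  finally show ?case by (simp add: wedge_assoc fun_eq_iff)
qed



lemma fadd_fzero_left[simp]: "fadd fzero x = x" by (simp add: fun_eq_iff)
lemma fadd_fzero_right[simp]: "fadd x fzero = x" by (simp add: fun_eq_iff)

lemma Fmult_zero1: "Fmult (\<theta>, \<omega>) (fzero, x) = (\<theta>, fadd \<omega> x)"
  by (simp add: Fmult_def fun_eq_iff)
lemma Fmult_zero2: "Fmult (\<theta>, \<omega>) (x, fzero) = (fadd \<theta> x, fadd \<omega> (wedge \<theta> x))"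
  by (simp add: Fmult_def fun_eq_iff)

lemma lin_zero:
  assumes "linear_on_forms n m f" shows "f fzero = 0"
proof -
  have "f (fscale 0 fzero) = 0 *\<^sub>R f fzero" using assms forms_zero unfolding linear_on_forms_def by blast
  moreover have "fscale 0 fzero = fzero" by (simp add: fun_eq_iff)
  ultimately show ?thesis by simp
qed

lemma lin_add:
  assumes "linear_on_forms n m f" "x \<in> forms n m" "y \<in> forms n m" shows "f (fadd x y) = f x + f y"
  using assms unfolding linear_on_forms_def by blast

lemma lin_scale:
  assumes "linear_on_forms n m f" "x \<in> forms n m" shows "f (fscale c x) = c *\<^sub>R f x"
  using assms unfolding linear_on_forms_def by blast

lemma lin_sub:
  assumes "linear_on_forms n m f" "x \<in> forms n m" "y \<in> forms n m"
  shows "f (fadd x (fscale (-1) y)) = f x - f y"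
  using lin_add[OF assms(1,2) forms_scale[OF assms(3)]] lin_scale[OF assms(1,3)] by simp

lemma wedge_forms11: "a \<in> forms n 1 \<Longrightarrow> b \<in> forms n 1 \<Longrightarrow> wedge a b \<in> forms n 2"
  using wedge_forms[of a n 1 b 1] by (metis one_add_one)



theorem lemma5p6:
  fixes br :: "'v1::euclidean_space \<Rightarrow> 'v1 \<Rightarrow> 'v2::euclidean_space"
    and n k :: nat
    and pi1 :: "form \<Rightarrow> 'v1" and pi2 :: "form \<Rightarrow> 'v2"
    and \<eta> :: form
  assumes G: "step2_carnot br"
    and n: "n \<ge> carnot_rank br"
    and k: "k \<le> n"
    and pi: "carnot_morphism_Fn n br pi1 pi2"
    and surj: "surjective_Fn n pi1 pi2"
    and eta: "\<eta> \<in> forms n (n - k)"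
  shows "((\<exists>\<psi> :: 'v1 \<times> 'v2 \<Rightarrow> form. \<forall>p\<in>Fn n. \<psi> (cmap pi1 pi2 p) = psi_tilde k \<eta> p)
          \<longleftrightarrow> (\<forall>p\<in>Fn n. \<forall>q\<in>ker_Fn n pi1 pi2. psi_tilde k \<eta> p = psi_tilde k \<eta> (Fmult p q)))
       \<and> ((\<forall>p\<in>Fn n. \<forall>q\<in>ker_Fn n pi1 pi2. psi_tilde k \<eta> p = psi_tilde k \<eta> (Fmult p q))
          \<longleftrightarrow> \<eta> \<in> forms_pi n (n - k) pi1 pi2)
       \<and> ((\<exists>\<psi> :: 'v1 \<times> 'v2 \<Rightarrow> form. \<forall>p\<in>Fn n. \<psi> (cmap pi1 pi2 p) = psi_tilde k \<eta> p)
          \<longrightarrow> (\<exists>!\<psi> :: 'v1 \<times> 'v2 \<Rightarrow> form. \<forall>p\<in>Fn n. \<psi> (cmap pi1 pi2 p) = psi_tilde k \<eta> p))"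
proof -
  define P where "P = psi_tilde k \<eta>"
  define K where "K = ker_Fn n pi1 pi2"
  have lin1: "linear_on_forms n 1 pi1" and lin2: "linear_on_forms n 2 pi2"
    and hom: "\<And>\<theta> \<theta>'. \<theta> \<in> forms n 1 \<Longrightarrow> \<theta>' \<in> forms n 1 \<Longrightarrow> pi2 (wedge \<theta> \<theta>') = br (pi1 \<theta>) (pi1 \<theta>')"
    using pi unfolding carnot_morphism_Fn_def by auto
  have bil: "bilinear br" using G unfolding step2_carnot_def by auto
  have br0: "br x 0 = 0" for x using bil by (simp add: bilinear_rzero)
  have Fn_iff: "(\<theta>, \<omega>) \<in> Fn n \<longleftrightarrow> \<theta> \<in> forms n 1 \<and> \<omega> \<in> forms n 2" for \<theta> \<omega>
    by (simp add: Fn_def)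
  have K_iff: "(\<theta>, \<omega>) \<in> K \<longleftrightarrow> \<theta> \<in> forms n 1 \<and> \<omega> \<in> forms n 2 \<and> pi1 \<theta> = 0 \<and> pi2 \<omega> = 0" for \<theta> \<omega>
    by (simp add: K_def ker_Fn_def Fn_def cmap_def)
  have P_even: "P (\<theta>, \<omega>) = wedge (wpow \<omega> (k div 2)) \<eta>" if "even k" for \<theta> \<omega>
    using that by (simp add: P_def psi_tilde_def)
  have P_odd: "P (\<theta>, \<omega>) = wedge \<theta> (wedge (wpow \<omega> ((k - 1) div 2)) \<eta>)" if "odd k" for \<theta> \<omega>
    using that by (simp add: P_def psi_tilde_def)

  have Fmult_Fn: "Fmult p q \<in> Fn n" if "p \<in> Fn n" "q \<in> Fn n" for p q
    using that by (auto simp: Fn_def Fmult_def intro!: forms_add wedge_forms11)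
  have cmap_Fmult: "cmap pi1 pi2 (Fmult p q) = cmap pi1 pi2 p" if "p \<in> Fn n" "q \<in> K" for p q
  proof -
    obtain \<theta> \<omega> \<theta>' \<omega>' where pq: "p = (\<theta>, \<omega>)" "q = (\<theta>', \<omega>')" by (cases p, cases q)
    have h: "\<theta> \<in> forms n 1" "\<omega> \<in> forms n 2" "\<theta>' \<in> forms n 1" "\<omega>' \<in> forms n 2" "pi1 \<theta>' = 0" "pi2 \<omega>' = 0"
      using that unfolding pq Fn_iff K_iff by auto
    have "pi1 (fadd \<theta> \<theta>') = pi1 \<theta>" using lin_add[OF lin1 h(1,3)] h by simp
    moreover have "pi2 (fadd (fadd \<omega> \<omega>') (wedge \<theta> \<theta>')) = pi2 \<omega>"
      using lin_add[OF lin2 forms_add[OF h(2,4)] wedge_forms11[OF h(1,3)]] lin_add[OF lin2 h(2,4)]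
        hom[OF h(1,3)] h br0 by simp
    ultimately show ?thesis unfolding pq by (simp add: Fmult_def cmap_def)
  qed
  have inv: "\<exists>q\<in>K. Fmult p q = p'" if "p \<in> Fn n" "p' \<in> Fn n" "cmap pi1 pi2 p = cmap pi1 pi2 p'" for p p'
  proof -
    obtain \<theta> \<omega> \<theta>1 \<omega>1 where pq: "p = (\<theta>, \<omega>)" "p' = (\<theta>1, \<omega>1)" by (cases p, cases p')
    have h: "\<theta> \<in> forms n 1" "\<omega> \<in> forms n 2" "\<theta>1 \<in> forms n 1" "\<omega>1 \<in> forms n 2"
      "pi1 \<theta> = pi1 \<theta>1" "pi2 \<omega> = pi2 \<omega>1"
      using that unfolding pq Fn_iff by (auto simp: cmap_def)
    define d where "d = fadd \<theta>1 (fscale (-1) \<theta>)"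
    define e where "e = fadd \<omega>1 (fscale (-1) (fadd \<omega> (wedge \<theta> d)))"
    have d: "d \<in> forms n 1" unfolding d_def using h by (simp add: forms_add forms_scale)
    have pd: "pi1 d = 0" unfolding d_def using lin_sub[OF lin1 h(3,1)] h by simp
    have wd: "wedge \<theta> d \<in> forms n 2" using wedge_forms11[OF h(1) d] .
    have e: "e \<in> forms n 2" unfolding e_def using h wd by (simp add: forms_add forms_scale)
    have pe: "pi2 e = 0" unfolding e_def
      using lin_sub[OF lin2 h(4) forms_add[OF h(2) wd]] lin_add[OF lin2 h(2) wd] hom[OF h(1) d] pd br0 h
      by simp
    have "(d, e) \<in> K" using d e pd pe by (simp add: K_iff)
    moreover have "Fmult p (d, e) = p'" unfolding pq d_def e_def by (simp add: Fmult_def fun_eq_iff)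
    ultimately show ?thesis by blast
  qed
  have AB: "(\<exists>\<psi> :: 'v1 \<times> 'v2 \<Rightarrow> form. \<forall>p\<in>Fn n. \<psi> (cmap pi1 pi2 p) = P p)
          \<longleftrightarrow> (\<forall>p\<in>Fn n. \<forall>q\<in>K. P p = P (Fmult p q))"
  proof
    assume "\<exists>\<psi> :: 'v1 \<times> 'v2 \<Rightarrow> form. \<forall>p\<in>Fn n. \<psi> (cmap pi1 pi2 p) = P p"
    then obtain \<psi> :: "'v1 \<times> 'v2 \<Rightarrow> form" where ps: "\<forall>p\<in>Fn n. \<psi> (cmap pi1 pi2 p) = P p" by blast
    show "\<forall>p\<in>Fn n. \<forall>q\<in>K. P p = P (Fmult p q)"
    proof (intro ballI)
      fix p q assume p: "p \<in> Fn n" and q: "q \<in> K"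
      have qF: "q \<in> Fn n" using q by (simp add: K_def ker_Fn_def)
      have "P p = \<psi> (cmap pi1 pi2 p)" using ps p by simp
      also have "\<dots> = \<psi> (cmap pi1 pi2 (Fmult p q))" using cmap_Fmult[OF p q] by simp
      also have "\<dots> = P (Fmult p q)" using ps Fmult_Fn[OF p qF] by simp
      finally show "P p = P (Fmult p q)" .
    qed
  next
    assume B: "\<forall>p\<in>Fn n. \<forall>q\<in>K. P p = P (Fmult p q)"
    define \<psi> where "\<psi> x = P (SOME p. p \<in> Fn n \<and> cmap pi1 pi2 p = x)" for x
    have "\<forall>p\<in>Fn n. \<psi> (cmap pi1 pi2 p) = P p"
    proof
      fix p assume p: "p \<in> Fn n"
      define p' where "p' = (SOME p'. p' \<in> Fn n \<and> cmap pi1 pi2 p' = cmap pi1 pi2 p)"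
      have p': "p' \<in> Fn n \<and> cmap pi1 pi2 p' = cmap pi1 pi2 p"
        unfolding p'_def by (rule someI[of _ p]) (use p in simp)
      then obtain q where "q \<in> K" "Fmult p q = p'" using inv[OF p] by metis
      then have "P p = P p'" using B p by metis
      then show "\<psi> (cmap pi1 pi2 p) = P p" unfolding \<psi>_def p'_def by simp
    qed
    then show "\<exists>\<psi> :: 'v1 \<times> 'v2 \<Rightarrow> form. \<forall>p\<in>Fn n. \<psi> (cmap pi1 pi2 p) = P p" by blast
  qed
  have U: "(\<exists>\<psi> :: 'v1 \<times> 'v2 \<Rightarrow> form. \<forall>p\<in>Fn n. \<psi> (cmap pi1 pi2 p) = P p)
          \<longrightarrow> (\<exists>!\<psi> :: 'v1 \<times> 'v2 \<Rightarrow> form. \<forall>p\<in>Fn n. \<psi> (cmap pi1 pi2 p) = P p)"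
  proof (intro impI)
    assume "\<exists>\<psi> :: 'v1 \<times> 'v2 \<Rightarrow> form. \<forall>p\<in>Fn n. \<psi> (cmap pi1 pi2 p) = P p"
    then obtain \<psi> :: "'v1 \<times> 'v2 \<Rightarrow> form" where ps: "\<forall>p\<in>Fn n. \<psi> (cmap pi1 pi2 p) = P p" by blast
    show "\<exists>!\<psi> :: 'v1 \<times> 'v2 \<Rightarrow> form. \<forall>p\<in>Fn n. \<psi> (cmap pi1 pi2 p) = P p"
    proof (rule ex1I[of _ \<psi>])
      fix gg :: "'v1 \<times> 'v2 \<Rightarrow> form" assume ch: "\<forall>p\<in>Fn n. gg (cmap pi1 pi2 p) = P p"
      show "gg = \<psi>"
      proof
        fix x
        obtain p where "p \<in> Fn n" "x = cmap pi1 pi2 p"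
          using surj unfolding surjective_Fn_def by (metis UNIV_I imageE)
        then show "gg x = \<psi> x" using ps ch by simp
      qed
    qed (use ps in blast)
  qed
  have BC: "(\<forall>p\<in>Fn n. \<forall>q\<in>K. P p = P (Fmult p q)) \<longleftrightarrow> \<eta> \<in> forms_pi n (n - k) pi1 pi2"
  proof
    assume C: "\<eta> \<in> forms_pi n (n - k) pi1 pi2"
    show "\<forall>p\<in>Fn n. \<forall>q\<in>K. P p = P (Fmult p q)"
    proof (intro ballI)
      fix p q assume p: "p \<in> Fn n" and q: "q \<in> K"
      obtain \<theta> \<omega> \<theta>' \<omega>' where pq: "p = (\<theta>, \<omega>)" "q = (\<theta>', \<omega>')" by (cases p, cases q)
      have h: "\<theta> \<in> forms n 1" "\<omega> \<in> forms n 2" "\<theta>' \<in> forms n 1" "\<omega>' \<in> forms n 2"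
        using p q unfolding pq Fn_iff K_iff by auto
      have an: "wedge \<theta>' \<eta> = fzero" "wedge \<omega>' \<eta> = fzero"
        using C q unfolding pq forms_pi_def K_def Anh_def by auto
      define \<alpha> where "\<alpha> = fadd \<omega>' (wedge \<theta> \<theta>')"
      have al: "\<alpha> \<in> forms n 2" unfolding \<alpha>_def using h by (simp add: forms_add wedge_forms11)
      have ale: "wedge \<alpha> \<eta> = fzero"
        unfolding \<alpha>_def wedge_add_left wedge_assoc an by (simp add: fun_eq_iff)
      have FM: "Fmult p q = (fadd \<theta> \<theta>', fadd \<omega> \<alpha>)"
        unfolding pq \<alpha>_def by (simp add: Fmult_def fun_eq_iff)
      have A: "wedge (wpow (fadd \<omega> \<alpha>) j) \<eta> = wedge (wpow \<omega> j) \<eta>" for j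
        by (rule lemA[OF h(2) al ale])
      show "P p = P (Fmult p q)"
      proof (cases "even k")
        case True
        show ?thesis unfolding FM unfolding pq P_even[OF True] A ..
      next
        case False
        let ?j = "(k - 1) div 2"
        have c: "wedge \<theta>' (wpow \<omega> ?j) = wedge (wpow \<omega> ?j) \<theta>'"
          by (rule wedge_comm[OF h(3) wpow_forms[OF h(2)]]) simp
        have "wedge \<theta>' (wedge (wpow \<omega> ?j) \<eta>) = fzero"
          by (metis c an(1) wedge_assoc wedge_zero_right)
        then show ?thesis unfolding FM unfolding pq P_odd[OF False] A wedge_add_left by (simp add: fun_eq_iff)
      qed
    qed
  next
    assume B: "\<forall>p\<in>Fn n. \<forall>q\<in>K. P p = P (Fmult p q)"
    have z1: "fzero \<in> forms n 1" and z2: "fzero \<in> forms n 2" by (rule forms_zero)+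
    have "K \<subseteq> Anh n \<eta>"
    proof
      fix q assume q: "q \<in> K"
      obtain \<theta>' \<omega>' where q': "q = (\<theta>', \<omega>')" by (cases q)
      have h: "\<theta>' \<in> forms n 1" "\<omega>' \<in> forms n 2" "pi1 \<theta>' = 0" "pi2 \<omega>' = 0"
        using q unfolding q' K_iff by auto
      have kw: "(fzero, fscale t \<omega>') \<in> K" for t
        using h lin_zero[OF lin1] lin_scale[OF lin2 h(2)] by (simp add: K_iff forms_zero forms_scale)
      have kt: "(fscale t \<theta>', fzero) \<in> K" for t
        using h lin_zero[OF lin2] lin_scale[OF lin1 h(1)] by (simp add: K_iff forms_zero forms_scale)
      have kt1: "(\<theta>', fzero) \<in> K"
        using h lin_zero[OF lin2] by (simp add: K_iff forms_zero)
      have wedge_eq: "wedge \<theta>' \<eta> = fzero \<and> wedge \<omega>' \<eta> = fzero"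
      proof (cases "even k")
        case True
        then obtain j where kj: "k = 2 * j" by blast
        have Pe: "P (x, y) = wedge (wpow y j) \<eta>" for x y using P_even[OF True] kj by simp
        show ?thesis
        proof (cases "j = 0")
          case True
          have "wedge \<theta>' \<eta> \<in> forms n (1 + (n - k))" by (rule wedge_forms[OF h(1) eta])
          moreover have "wedge \<omega>' \<eta> \<in> forms n (2 + (n - k))" by (rule wedge_forms[OF h(2) eta])
          moreover have "n < 1 + (n - k)" "n < 2 + (n - k)" using True kj by simp_all
          ultimately show ?thesis using forms_big by blast
        next
          case False
          have e1: "2 + (n - k) = n - 2 * (j - 1)" using False kj k by simp
          have e2: "1 + (n - k) = n - 2 * (j - 1) - 1" using False kj k by simp
          have "wedge \<omega>' \<eta> = fzero"
          proof (rule L_even[of "j - 1" n])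
            show "wedge \<omega>' \<eta> \<in> forms n (n - 2 * (j - 1))" using wedge_forms[OF h(2) eta] unfolding e1 .
          next
            fix \<omega> assume w: "\<omega> \<in> forms n 2"
            have "wedge (wedge \<omega>' (wpow \<omega> (j - 1))) \<eta> = fzero"
            proof (rule poly_extract[OF w h(2), where F = "\<lambda>x. wedge x \<eta>"])
              fix t
              have "P (fzero, \<omega>) = P (Fmult (fzero, \<omega>) (fzero, fscale t \<omega>'))"
                by (rule B[rule_format]) (use kw w z1 in \<open>simp_all add: Fn_iff\<close>)
              then show "wedge (wpow (fadd \<omega> (fscale t \<omega>')) j) \<eta> = wedge (wpow \<omega> j) \<eta>"
                unfolding Fmult_zero1 Pe by simp
            qed (use False in \<open>auto simp: wedge_add_left wedge_scale_left\<close>)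
            moreover have "wedge \<omega>' (wpow \<omega> (j - 1)) = wedge (wpow \<omega> (j - 1)) \<omega>'"
              by (rule wedge_comm[OF h(2) wpow_forms[OF w]]) simp
            ultimately show "wedge (wpow \<omega> (j - 1)) (wedge \<omega>' \<eta>) = fzero" by (metis wedge_assoc)
          qed (use kj k False in simp)
          moreover have "wedge \<theta>' \<eta> = fzero"
          proof (rule L_odd[of "j - 1" n])
            show "wedge \<theta>' \<eta> \<in> forms n (n - 2 * (j - 1) - 1)" using wedge_forms[OF h(1) eta] unfolding e2 .
          next
            fix \<theta> \<omega> assume th: "\<theta> \<in> forms n 1" and w: "\<omega> \<in> forms n 2"
            have tt: "wedge \<theta> \<theta>' \<in> forms n 2" by (rule wedge_forms11[OF th h(1)])
            have "wedge (wedge (wedge \<theta> \<theta>') (wpow \<omega> (j - 1))) \<eta> = fzero"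
            proof (rule poly_extract[OF w tt, where F = "\<lambda>x. wedge x \<eta>"])
              fix t
              have "P (\<theta>, \<omega>) = P (Fmult (\<theta>, \<omega>) (fscale t \<theta>', fzero))"
                by (rule B[rule_format]) (use kt w th in \<open>simp_all add: Fn_iff\<close>)
              then show "wedge (wpow (fadd \<omega> (fscale t (wedge \<theta> \<theta>'))) j) \<eta> = wedge (wpow \<omega> j) \<eta>"
                unfolding Fmult_zero2 Pe wedge_scale_right by simp
            qed (use False in \<open>auto simp: wedge_add_left wedge_scale_left\<close>)
            moreover have "wedge \<theta>' (wpow \<omega> (j - 1)) = wedge (wpow \<omega> (j - 1)) \<theta>'"
              by (rule wedge_comm[OF h(1) wpow_forms[OF w]]) simp
            ultimately show "wedge \<theta> (wedge (wpow \<omega> (j - 1)) (wedge \<theta>' \<eta>)) = fzero"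
              by (metis wedge_assoc)
          qed (use kj k False in simp)
          ultimately show ?thesis by simp
        qed
      next
        case False
        then obtain j where kj: "k = 2 * j + 1" using oddE by blast
        have Po: "P (x, y) = wedge x (wedge (wpow y j) \<eta>)" for x y using P_odd[OF False] kj by simp
        have "wedge \<theta>' \<eta> = fzero"
        proof (rule L_even[of j n])
          have e: "1 + (n - k) = n - 2 * j" using kj k by simp
          show "wedge \<theta>' \<eta> \<in> forms n (n - 2 * j)" using wedge_forms[OF h(1) eta] unfolding e .
        next
          fix \<omega> assume w: "\<omega> \<in> forms n 2"
          have "P (fzero, \<omega>) = P (Fmult (fzero, \<omega>) (\<theta>', fzero))"
            by (rule B[rule_format]) (use kt1 w z1 in \<open>simp_all add: Fn_iff\<close>)
          then have "wedge \<theta>' (wedge (wpow \<omega> j) \<eta>) = fzero"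
            unfolding Fmult_zero2 Po by (simp add: fun_eq_iff)
          moreover have "wedge \<theta>' (wpow \<omega> j) = wedge (wpow \<omega> j) \<theta>'"
            by (rule wedge_comm[OF h(1) wpow_forms[OF w]]) simp
          ultimately show "wedge (wpow \<omega> j) (wedge \<theta>' \<eta>) = fzero" by (metis wedge_assoc)
        qed (use kj k in simp)
        moreover have "wedge \<omega>' \<eta> = fzero"
        proof (cases "j = 0")
          case True
          have "wedge \<omega>' \<eta> \<in> forms n (2 + (n - k))" by (rule wedge_forms[OF h(2) eta])
          moreover have "n < 2 + (n - k)" using True kj k by simp
          ultimately show ?thesis using forms_big by blast
        next
          case False
          have e1: "2 + (n - k) = n - 2 * (j - 1) - 1" using False kj k by simp
          show ?thesis
          proof (rule L_odd[of "j - 1" n])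
            show "wedge \<omega>' \<eta> \<in> forms n (n - 2 * (j - 1) - 1)" using wedge_forms[OF h(2) eta] unfolding e1 .
          next
            fix \<theta> \<omega> assume th: "\<theta> \<in> forms n 1" and w: "\<omega> \<in> forms n 2"
            have "wedge \<theta> (wedge (wedge \<omega>' (wpow \<omega> (j - 1))) \<eta>) = fzero"
            proof (rule poly_extract[OF w h(2), where F = "\<lambda>x. wedge \<theta> (wedge x \<eta>)"])
              fix t
              have "P (\<theta>, \<omega>) = P (Fmult (\<theta>, \<omega>) (fzero, fscale t \<omega>'))"
                by (rule B[rule_format]) (use kw w th in \<open>simp_all add: Fn_iff\<close>)
              then show "wedge \<theta> (wedge (wpow (fadd \<omega> (fscale t \<omega>')) j) \<eta>) = wedge \<theta> (wedge (wpow \<omega> j) \<eta>)"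
                unfolding Fmult_zero1 Po by simp
            qed (use False in \<open>auto simp: wedge_add_left wedge_scale_left wedge_add_right wedge_scale_right\<close>)
            moreover have "wedge \<omega>' (wpow \<omega> (j - 1)) = wedge (wpow \<omega> (j - 1)) \<omega>'"
              by (rule wedge_comm[OF h(2) wpow_forms[OF w]]) simp
            ultimately show "wedge \<theta> (wedge (wpow \<omega> (j - 1)) (wedge \<omega>' \<eta>)) = fzero"
              by (metis wedge_assoc)
          qed (use kj k False in simp)
        qed
        ultimately show ?thesis by simp
      qed
      show "q \<in> Anh n \<eta>" unfolding q' Anh_def using h wedge_eq by (simp add: Fn_iff)
    qed
    then show "\<eta> \<in> forms_pi n (n - k) pi1 pi2" unfolding forms_pi_def K_def using eta by simp
  qed
  show ?thesis using AB BC U unfolding P_def K_def by blast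
qed

end
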